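(* Let $k\in\mathbb{N}$ and $B\in\mathsf{PSD}_d^k$. Then the matrix $M_{k-1}(B)$ is positive semidefinite.
   Context: For $v\in\mathbb{C}^d$, $\sigma(v)$ is the number of nonzero coordinates. $\mathsf{PSD}_d^k$ is the set of matrices $\sum_{n\in I}|v_n\rangle\langle v_n|$ for finite families $v_n\in\mathbb{C}^d$ with $\sigma(v_n)\le k$. For $B\in\mathcal{M}_d(\mathbb{C})$ and $m\ge 0$, $M_m(B)$ is the matrix with $M_m(B)_{ii}=m|B_{ii}|$ and $M_m(B)_{ij}=-|B_{ij}|$ for $i\ne j$. *)

theory Defs
  imports "HOL-Analysis.Analysis"
begin

definition sigma :: "complex ^ 'd \<Rightarrow> nat" where
  "sigma v = card {i. v $ i \<noteq> 0}"

definition ketbra :: "complex ^ 'd \<Rightarrow> complex ^ 'd ^ 'd" where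
  "ketbra v = (\<chi> i j. v $ i * cnj (v $ j))"

definition PSDk :: "nat \<Rightarrow> (complex ^ 'd ^ 'd) set" where
  "PSDk k = {B. \<exists>(I :: nat set) v. finite I \<and> (\<forall>n\<in>I. sigma (v n) \<le> k)
                  \<and> B = (\<Sum>n\<in>I. ketbra (v n))}"

definition Mmat :: "real \<Rightarrow> complex ^ 'd ^ 'd \<Rightarrow> complex ^ 'd ^ 'd" where
  "Mmat m B = (\<chi> i j. if i = j then complex_of_real (m * cmod (B $ i $ i))
                       else - complex_of_real (cmod (B $ i $ j)))"

definition psd :: "complex ^ 'd ^ 'd \<Rightarrow> bool" where
  "psd A \<longleftrightarrow> (\<forall>i j. A $ i $ j = cnj (A $ j $ i)) \<and>
     (\<forall>x :: complex ^ 'd. let q = (\<Sum>i\<in>UNIV. \<Sum>j\<in>UNIV. cnj (x $ i) * A $ i $ j * x $ j)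
        in Im q = 0 \<and> Re q \<ge> 0)"

end

theory Submission
  imports Defs
begin

lemma offdiag_bound:
  fixes a :: "'d::finite \<Rightarrow> real" and k :: nat
  assumes "card {i. a i \<noteq> 0} \<le> k"
  shows "(\<Sum>i\<in>UNIV. \<Sum>j\<in>UNIV. if i = j then 0 else a i * a j) \<le> (real k - 1) * (\<Sum>i\<in>UNIV. (a i)^2)"
proof -
  let ?S = "{i. a i \<noteq> 0}"
  have e1: "(\<Sum>i\<in>UNIV. \<Sum>j\<in>UNIV. if i = j then 0 else a i * a j)
      = (\<Sum>i\<in>UNIV. a i * (\<Sum>j\<in>UNIV. a j) - (a i)^2)"
  proof (rule sum.cong[OF refl])
    fix i
    have "(\<Sum>j\<in>UNIV. if i = j then 0 else a i * a j) = (\<Sum>j\<in>UNIV. a i * a j - (if i = j then a i * a j else 0))"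
      by (rule sum.cong) auto
    also have "\<dots> = a i * (\<Sum>j\<in>UNIV. a j) - (a i)^2"
      by (simp add: sum_subtractf sum_distrib_left power2_eq_square)
    finally show "(\<Sum>j\<in>UNIV. if i = j then 0 else a i * a j) = a i * (\<Sum>j\<in>UNIV. a j) - (a i)^2" .
  qed
  also have "\<dots> = (\<Sum>i\<in>UNIV. a i)^2 - (\<Sum>i\<in>UNIV. (a i)^2)"
    by (simp add: sum_subtractf sum_distrib_right power2_eq_square)
  finally have e: "(\<Sum>i\<in>UNIV. \<Sum>j\<in>UNIV. if i = j then 0 else a i * a j) = (\<Sum>i\<in>UNIV. a i)^2 - (\<Sum>i\<in>UNIV. (a i)^2)" .
  have s1: "(\<Sum>i\<in>UNIV. a i) = sum a ?S"
    by (rule sum.mono_neutral_right) auto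
  have s2: "(\<Sum>i\<in>UNIV. (a i)^2) = (\<Sum>i\<in>?S. (a i)^2)"
    by (rule sum.mono_neutral_right) auto
  have "(sum a ?S)^2 \<le> (\<Sum>i\<in>?S. (a i)^2) * real (card ?S)"
    by (rule sum_squared_le_sum_of_squares)
  also have "\<dots> \<le> (\<Sum>i\<in>?S. (a i)^2) * real k"
    using assms by (intro mult_left_mono) (auto intro: sum_nonneg)
  finally have "(\<Sum>i\<in>UNIV. a i)^2 \<le> real k * (\<Sum>i\<in>UNIV. (a i)^2)" using s1 s2 by (simp only: mult.commute)
  then show ?thesis using e by (simp add: algebra_simps)
qed

lemma B_entry:
  assumes "B = (\<Sum>n\<in>I. ketbra (v n))"
  shows "B $ i $ j = (\<Sum>n\<in>I. v n $ i * cnj (v n $ j))"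
  using assms by (simp add: sum_component ketbra_def)

theorem proposition3p11:
  fixes B :: "complex ^ 'd ^ 'd" and k :: nat
  assumes "1 \<le> k"
    and "B \<in> PSDk k"
  shows "psd (Mmat (real k - 1) B)"
proof -
  obtain I :: "nat set" and v where fI: "finite I" and sg: "\<forall>n\<in>I. sigma (v n) \<le> k"
    and Bdef: "B = (\<Sum>n\<in>I. ketbra (v n))"
    using assms(2) unfolding PSDk_def by blast
  note Be = B_entry[OF Bdef]
  define m where "m = real k - 1"
  have m0: "m \<ge> 0" using assms(1) by (simp add: m_def)
  define M where "M = Mmat m B"
  have herB: "B $ i $ j = cnj (B $ j $ i)" for i j
    by (simp add: Be mult.commute)
  have Mij: "M $ i $ j = (if i = j then complex_of_real (m * cmod (B $ i $ i))
                       else - complex_of_real (cmod (B $ i $ j)))" for i j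
    by (simp add: M_def Mmat_def)
  have Msym: "M $ i $ j = M $ j $ i" for i j
    using herB[of i j] by (simp add: Mij)
  have Mreal: "cnj (M $ i $ j) = M $ i $ j" for i j
    by (simp add: Mij)
  have Bdiag: "cmod (B $ i $ i) = (\<Sum>n\<in>I. (cmod (v n $ i))^2)" for i
  proof -
    have "B $ i $ i = complex_of_real (\<Sum>n\<in>I. (cmod (v n $ i))^2)"
    proof -
      have "v n $ i * cnj (v n $ i) = complex_of_real ((cmod (v n $ i))^2)" for n
        by (metis complex_norm_square of_real_power)
      then show ?thesis by (simp add: Be)
    qed
    moreover have "(\<Sum>n\<in>I. (cmod (v n $ i))^2) \<ge> 0" by (simp add: sum_nonneg)
    ultimately show ?thesis by (simp only: norm_of_real abs_of_nonneg)
  qed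
  have Boff: "cmod (B $ i $ j) \<le> (\<Sum>n\<in>I. cmod (v n $ i) * cmod (v n $ j))" for i j
    unfolding Be by (rule order_trans[OF norm_sum]) (simp add: norm_mult)
  have "Im q = 0 \<and> Re q \<ge> 0" if qdef: "q = (\<Sum>i\<in>UNIV. \<Sum>j\<in>UNIV. cnj (x $ i) * M $ i $ j * x $ j)"
    for q and x :: "complex ^ 'd"
  proof
    have "cnj q = (\<Sum>i\<in>UNIV. \<Sum>j\<in>UNIV. x $ i * M $ i $ j * cnj (x $ j))"
      by (simp add: qdef Mreal)
    also have "\<dots> = (\<Sum>j\<in>UNIV. \<Sum>i\<in>UNIV. x $ i * M $ i $ j * cnj (x $ j))"
      by (rule sum.swap)
    also have "\<dots> = q"
      unfolding qdef by (intro sum.cong refl) (simp add: Msym mult_ac)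
    finally have "cnj q = q" .
    then show "Im q = 0" by (metis complex_cnj_cancel_iff complex_is_Real_iff Reals_cnj_iff)
    define a where "a n i = cmod (v n $ i) * cmod (x $ i)" for n i
    define Off where "Off = (\<Sum>i\<in>UNIV. \<Sum>j\<in>UNIV. if i = j then 0 else cmod (B $ i $ j) * cmod (x $ i) * cmod (x $ j))"
    define D where "D = (\<Sum>i\<in>UNIV. cmod (B $ i $ i) * (cmod (x $ i))^2)"
    have "Re q = (\<Sum>i\<in>UNIV. \<Sum>j\<in>UNIV. Re (cnj (x $ i) * M $ i $ j * x $ j))"
      by (simp add: qdef)
    also have "\<dots> \<ge> (\<Sum>i\<in>UNIV. \<Sum>j\<in>UNIV. m * (if i = j then cmod (B $ i $ i) * (cmod (x $ i))^2 else 0)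
          - (if i = j then 0 else cmod (B $ i $ j) * cmod (x $ i) * cmod (x $ j)))"
    proof (intro sum_mono)
      fix i j
      show "m * (if i = j then cmod (B $ i $ i) * (cmod (x $ i))^2 else 0)
          - (if i = j then 0 else cmod (B $ i $ j) * cmod (x $ i) * cmod (x $ j))
          \<le> Re (cnj (x $ i) * M $ i $ j * x $ j)"
      proof (cases "i = j")
        case True
        have "Re (cnj (x $ i) * M $ i $ i * x $ i) = m * cmod (B $ i $ i) * ((Re (x $ i))^2 + (Im (x $ i))^2)"
          by (simp add: Mij algebra_simps power2_eq_square)
        then have "Re (cnj (x $ i) * M $ i $ i * x $ i) = m * cmod (B $ i $ i) * (cmod (x $ i))^2"
          by (simp only: cmod_power2)
        then show ?thesis using True by simp
      next
        case False
        have "Re (cnj (x $ i) * M $ i $ j * x $ j) = - (cmod (B $ i $ j) * Re (cnj (x $ i) * x $ j))"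
          using False by (simp add: Mij algebra_simps)
        moreover have "Re (cnj (x $ i) * x $ j) \<le> cmod (x $ i) * cmod (x $ j)"
          by (metis complex_Re_le_cmod complex_mod_cnj norm_mult)
        ultimately show ?thesis using False
          by (simp add: mult_left_mono mult.assoc)
      qed
    qed
    also have "(\<Sum>i\<in>UNIV. \<Sum>j\<in>UNIV. m * (if i = j then cmod (B $ i $ i) * (cmod (x $ i))^2 else 0)
          - (if i = j then 0 else cmod (B $ i $ j) * cmod (x $ i) * cmod (x $ j))) = m * D - Off"
      unfolding D_def Off_def sum_subtractf
      by (simp add: sum_distrib_left[symmetric] del: sum_distrib_left)
    finally have q1: "m * D - Off \<le> Re q" .
    have "Off \<le> (\<Sum>i\<in>UNIV. \<Sum>j\<in>UNIV. \<Sum>n\<in>I. if i = j then 0 else a n i * a n j)"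
      unfolding Off_def
    proof (intro sum_mono)
      fix i j
      show "(if i = j then 0 else cmod (B $ i $ j) * cmod (x $ i) * cmod (x $ j))
          \<le> (\<Sum>n\<in>I. if i = j then 0 else a n i * a n j)"
      proof (cases "i = j")
        case False
        have "cmod (B $ i $ j) * (cmod (x $ i) * cmod (x $ j))
            \<le> (\<Sum>n\<in>I. cmod (v n $ i) * cmod (v n $ j)) * (cmod (x $ i) * cmod (x $ j))"
          by (intro mult_right_mono Boff) simp
        moreover have "(\<Sum>n\<in>I. a n i * a n j) = (\<Sum>n\<in>I. cmod (v n $ i) * cmod (v n $ j)) * (cmod (x $ i) * cmod (x $ j))"
          unfolding a_def sum_distrib_right by (rule sum.cong) (auto simp: mult_ac)
        ultimately show ?thesis using False
          by (simp add: mult.assoc)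
      qed simp
    qed
    also have "\<dots> = (\<Sum>i\<in>UNIV. \<Sum>n\<in>I. \<Sum>j\<in>UNIV. if i = j then 0 else a n i * a n j)"
      by (rule sum.cong[OF refl], rule sum.swap)
    also have "\<dots> = (\<Sum>n\<in>I. \<Sum>i\<in>UNIV. \<Sum>j\<in>UNIV. if i = j then 0 else a n i * a n j)"
      by (rule sum.swap)
    also have "\<dots> \<le> (\<Sum>n\<in>I. m * (\<Sum>i\<in>UNIV. (a n i)^2))"
    proof (intro sum_mono)
      fix n assume "n \<in> I"
      then have "sigma (v n) \<le> k" using sg by blast
      moreover have "{i. a n i \<noteq> 0} \<subseteq> {i. v n $ i \<noteq> 0}" by (auto simp: a_def)
      ultimately have "card {i. a n i \<noteq> 0} \<le> k"
        unfolding sigma_def by (meson card_mono finite order_trans)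
      then show "(\<Sum>i\<in>UNIV. \<Sum>j\<in>UNIV. if i = j then 0 else a n i * a n j) \<le> m * (\<Sum>i\<in>UNIV. (a n i)^2)"
        unfolding m_def by (rule offdiag_bound)
    qed
    also have "\<dots> = m * D"
    proof -
      have "(\<Sum>n\<in>I. m * (\<Sum>i\<in>UNIV. (a n i)^2)) = m * (\<Sum>n\<in>I. \<Sum>i\<in>UNIV. (a n i)^2)"
        by (simp add: sum_distrib_left)
      also have "(\<Sum>n\<in>I. \<Sum>i\<in>UNIV. (a n i)^2) = (\<Sum>i\<in>UNIV. \<Sum>n\<in>I. (a n i)^2)"
        by (rule sum.swap)
      also have "\<dots> = D"
        unfolding D_def Bdiag a_def power_mult_distrib sum_distrib_right by (rule refl)
      finally show ?thesis .
    qed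
    finally show "Re q \<ge> 0" using q1 by simp
  qed
  note key = this
  have "psd M"
    unfolding psd_def Let_def
  proof (intro conjI allI)
    fix i j show "M $ i $ j = cnj (M $ j $ i)" using Mreal Msym by metis
  next
    fix x :: "complex ^ 'd"
    show "Im (\<Sum>i\<in>UNIV. \<Sum>j\<in>UNIV. cnj (x $ i) * M $ i $ j * x $ j) = 0"
      using key by blast
    show "0 \<le> Re (\<Sum>i\<in>UNIV. \<Sum>j\<in>UNIV. cnj (x $ i) * M $ i $ j * x $ j)"
      using key by blast
  qed
  then show ?thesis unfolding M_def m_def .
qed

end
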